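(* For every integer $n\ge 1$, the subdivision scheme $S_n$ is convergent.
   Context: For an integer $n\ge1$, the subdivision scheme $S_n$ acts on real sequences $\mathbf f^k=(f^k_i)_{i\in\mathbb Z}$ (the value $f^k_i$ being associated with the dyadic point $2^{-k}i$), starting from initial data $\mathbf f^0$, by the refinement rules $$f^{k+1}_{2i}=\frac1{2n-1}\sum_{j=-n+1}^{n-1}f^k_{i+j},\qquad f^{k+1}_{2i+1}=\frac1{2n}\sum_{j=-n+1}^{n}f^k_{i+j},\qquad i\in\mathbb Z,\ k\ge0.$$ A subdivision scheme is called convergent if for every bounded initial sequence $\mathbf f^0$ there is a continuous function $F:\mathbb R\to\mathbb R$ with $\lim_{k\to\infty}\sup_{i\in\mathbb Z}|f^k_i-F(2^{-k}i)|=0$, and $F$ is not identically zero for some initial data; $F$ is called the limit function generated from $\mathbf f^0$. *)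

theory Defs
  imports "HOL-Analysis.Analysis"
begin

text \<open>One refinement step of the scheme S_n: maps the sequence f^k to f^(k+1).
  For m = 2i (even) and m = 2i+1 (odd) we have m div 2 = i (floor division).\<close>
definition subdiv_rule :: "nat \<Rightarrow> (int \<Rightarrow> real) \<Rightarrow> int \<Rightarrow> real" where
  "subdiv_rule n f m =
     (if even m
      then (\<Sum>j\<in>{-(int n)+1..int n - 1}. f (m div 2 + j)) / real (2*n - 1)
      else (\<Sum>j\<in>{-(int n)+1..int n}. f (m div 2 + j)) / real (2*n))"

definition generates_limit ::
  "((int \<Rightarrow> real) \<Rightarrow> int \<Rightarrow> real) \<Rightarrow> (int \<Rightarrow> real) \<Rightarrow> (real \<Rightarrow> real) \<Rightarrow> bool" where
  "generates_limit S f0 F \<longleftrightarrow> continuous_on UNIV F \<and>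
     (\<forall>\<epsilon>>0. \<exists>K. \<forall>k\<ge>K. \<forall>i. \<bar>(S ^^ k) f0 i - F (real_of_int i / 2 ^ k)\<bar> \<le> \<epsilon>)"

definition convergent_scheme :: "((int \<Rightarrow> real) \<Rightarrow> int \<Rightarrow> real) \<Rightarrow> bool" where
  "convergent_scheme S \<longleftrightarrow>
     (\<forall>f0. bounded (range f0) \<longrightarrow> (\<exists>F. generates_limit S f0 F)) \<and>
     (\<exists>f0 F. bounded (range f0) \<and> generates_limit S f0 F \<and> F \<noteq> (\<lambda>_. 0))"

end

theory Submission imports Defs begin

definition lipd :: "real \<Rightarrow> (int \<Rightarrow> real) \<Rightarrow> bool" where
  "lipd D f \<longleftrightarrow> (\<forall>i. \<bar>f (i+1) - f i\<bar> \<le> D)"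

lemma lipd_nat: "lipd D f \<Longrightarrow> \<bar>f (b + int k) - f b\<bar> \<le> real k * D"
proof (induction k)
  case 0 then show ?case by simp
next
  case (Suc k)
  have "\<bar>f (b + int (Suc k)) - f (b + int k)\<bar> \<le> D"
    using Suc.prems unfolding lipd_def by (metis add.assoc of_nat_Suc add.commute)
  then show ?case using Suc.IH Suc.prems by (simp add: algebra_simps)
qed

lemma lipd_abs: assumes "lipd D f" shows "\<bar>f a - f b\<bar> \<le> \<bar>real_of_int (a - b)\<bar> * D"
proof (cases "b \<le> a")
  case True
  then obtain k where "a = b + int k" by (metis le_iff_add nat_int zle_iff_zadd)
  then show ?thesis using lipd_nat[OF assms, of b k] by simp
next
  case False
  then obtain k where "b = a + int k" by (metis le_iff_add nat_int zle_iff_zadd linorder_le_cases)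
  then show ?thesis using lipd_nat[OF assms, of a k] by (simp add: abs_minus_commute)
qed

lemma gauss_up: "(\<Sum>j\<in>{a..a + int N - 1}. real_of_int (j - a + 1)) = real N * (real N + 1) / 2"
proof (induction N)
  case 0 then show ?case by simp
next
  case (Suc N)
  have "{a..a + int (Suc N) - 1} = insert (a + int N) {a..a + int N - 1}"
    by auto
  then show ?case using Suc by (simp add: field_simps)
qed

lemma gauss_down: "(\<Sum>j\<in>{b - int N + 1..b}. real_of_int (b - j + 1)) = real N * (real N + 1) / 2"
proof (induction N)
  case 0 then show ?case by simp
next
  case (Suc N)
  have "{b - int (Suc N) + 1..b} = insert (b - int N) {b - int N + 1..b}"
    by auto
  then show ?case using Suc by (simp add: field_simps)
qed


lemma lipd_nonneg: "lipd D f \<Longrightarrow> 0 \<le> D"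
  unfolding lipd_def by (meson abs_ge_zero order_trans)

lemma S_even: "subdiv_rule n f (2*i) = (\<Sum>j\<in>{-int n+1..int n-1}. f (i+j)) / real (2*n-1)"
  unfolding subdiv_rule_def by simp

lemma S_odd: "subdiv_rule n f (2*i+1) = (\<Sum>j\<in>{-int n+1..int n}. f (i+j)) / real (2*n)"
  unfolding subdiv_rule_def by simp

lemma avg_bound:
  assumes L: "lipd D f" and fin: "finite J" and c: "card J > 0" and bd: "\<forall>j\<in>J. \<bar>j\<bar> \<le> int n"
  shows "\<bar>(\<Sum>j\<in>J. f (i+j)) / real (card J) - f i\<bar> \<le> real n * D"
proof -
  have D0: "0 \<le> D" using lipd_nonneg[OF L] .
  have eq: "(\<Sum>j\<in>J. f (i+j)) / real (card J) - f i = (\<Sum>j\<in>J. f (i+j) - f i) / real (card J)"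
    using c by (simp add: sum_subtractf field_simps)
  have "\<bar>\<Sum>j\<in>J. f (i+j) - f i\<bar> \<le> (\<Sum>j\<in>J. \<bar>f (i+j) - f i\<bar>)" by (rule sum_abs)
  also have "\<dots> \<le> (\<Sum>j\<in>J. real n * D)"
  proof (rule sum_mono)
    fix j assume "j \<in> J"
    have "\<bar>f (i+j) - f i\<bar> \<le> \<bar>real_of_int (i + j - i)\<bar> * D" by (rule lipd_abs[OF L])
    also have "\<dots> \<le> real n * D" using bd \<open>j\<in>J\<close> D0
      by (intro mult_right_mono) (auto simp del: of_int_abs simp add: of_int_abs[symmetric])
    finally show "\<bar>f (i+j) - f i\<bar> \<le> real n * D" .
  qed
  also have "\<dots> = real (card J) * (real n * D)" by simp
  finally have "\<bar>\<Sum>j\<in>J. f (i+j) - f i\<bar> / real (card J) \<le> real n * D"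
    using c by (simp add: divide_le_eq mult.commute)
  then show ?thesis using eq by simp
qed

lemma S_close:
  assumes L: "lipd D f" and n: "n \<ge> 1"
  shows "\<bar>subdiv_rule n f m - f (m div 2)\<bar> \<le> real n * D"
proof (cases "even m")
  case True
  then obtain i where m: "m = 2*i" by blast
  have c: "card {-int n+1..int n-1} = 2*n-1" using n by simp
  have "\<bar>(\<Sum>j\<in>{-int n+1..int n-1}. f (i+j)) / real (card {-int n+1..int n-1}) - f i\<bar> \<le> real n * D"
    by (rule avg_bound[OF L]) (use n in auto)
  then show ?thesis using c m by (simp add: S_even)
next
  case False
  then obtain i where m: "m = 2*i+1" by (metis odd_two_times_div_two_succ)
  have c: "card {-int n+1..int n} = 2*n" using n by simp
  have "\<bar>(\<Sum>j\<in>{-int n+1..int n}. f (i+j)) / real (card {-int n+1..int n}) - f i\<bar> \<le> real n * D"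
    by (rule avg_bound[OF L]) (use n in auto)
  then show ?thesis using c m by (simp add: S_odd)
qed


lemma contract_even:
  assumes L: "lipd D f" and n: "n \<ge> 1"
  shows "\<bar>subdiv_rule n f (2*i+1) - subdiv_rule n f (2*i)\<bar> \<le> D / 2"
proof -
  define J where "J = {-int n+1..int n-1}"
  define A where "A = (\<Sum>j\<in>J. f (i+j))"
  have fin: "finite J" unfolding J_def by simp
  have J2: "{-int n+1..int n} = insert (int n) J" unfolding J_def using n by auto
  have nJ: "int n \<notin> J" unfolding J_def by auto
  have s2: "(\<Sum>j\<in>{-int n+1..int n}. f (i+j)) = A + f (i + int n)"
    unfolding J2 A_def using fin nJ by simp
  have cJ: "card J = 2*n-1" unfolding J_def using n by simp
  have r1: "real (2*n-1) = 2*real n - 1" using n by (simp add: of_nat_diff)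
  have key: "(\<Sum>j\<in>J. f (i + int n) - f (i+j)) = (2*real n - 1) * f (i + int n) - A"
    unfolding A_def using r1 by (simp add: sum_subtractf cJ)
  have npos: "2*real n - 1 > 0" using n by simp
  have diff: "subdiv_rule n f (2*i+1) - subdiv_rule n f (2*i)
      = (\<Sum>j\<in>J. f (i + int n) - f (i+j)) / (2*real n * (2*real n - 1))"
  proof -
    have e: "subdiv_rule n f (2*i) = A / (2*real n - 1)"
      unfolding S_even A_def J_def r1 ..
    have o: "subdiv_rule n f (2*i+1) = (A + f (i + int n)) / (2*real n)"
      unfolding S_odd s2 by simp
    show ?thesis unfolding e o key using npos n by (simp add: field_simps)
  qed
  have "\<bar>\<Sum>j\<in>J. f (i + int n) - f (i+j)\<bar> \<le> (\<Sum>j\<in>J. \<bar>f (i + int n) - f (i+j)\<bar>)" by (rule sum_abs)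
  also have "\<dots> \<le> (\<Sum>j\<in>J. real_of_int ((int n - 1) - j + 1) * D)"
  proof (rule sum_mono)
    fix j assume "j \<in> J"
    then have "j \<le> int n" unfolding J_def by auto
    have "\<bar>f (i + int n) - f (i+j)\<bar> \<le> \<bar>real_of_int (i + int n - (i+j))\<bar> * D" by (rule lipd_abs[OF L])
    then show "\<bar>f (i + int n) - f (i+j)\<bar> \<le> real_of_int ((int n - 1) - j + 1) * D"
      using \<open>j \<le> int n\<close> by simp
  qed
  also have "\<dots> = (\<Sum>j\<in>J. real_of_int ((int n - 1) - j + 1)) * D" by (simp add: sum_distrib_right)
  also have "(\<Sum>j\<in>J. real_of_int ((int n - 1) - j + 1)) = real (2*n-1) * (real (2*n-1) + 1) / 2"
  proof -
    have "J = {(int n - 1) - int (2*n-1) + 1..int n - 1}" unfolding J_def using n by auto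
    then show ?thesis using gauss_down[of "int n - 1" "2*n-1"] by simp
  qed
  finally have "\<bar>\<Sum>j\<in>J. f (i + int n) - f (i+j)\<bar> \<le> (2*real n - 1) * (2*real n) / 2 * D"
    using r1 by (simp add: algebra_simps)
  then show ?thesis unfolding diff using npos n
    by (simp add: abs_divide divide_le_eq field_simps)
qed

lemma contract_odd:
  assumes L: "lipd D f" and n: "n \<ge> 1"
  shows "\<bar>subdiv_rule n f (2*i+2) - subdiv_rule n f (2*i+1)\<bar> \<le> D / 2"
proof -
  define J where "J = {-int n+2..int n}"
  define B where "B = (\<Sum>j\<in>J. f (i+j))"
  have fin: "finite J" unfolding J_def by simp
  have J2: "{-int n+1..int n} = insert (-int n+1) J" unfolding J_def using n by auto
  have nJ: "-int n+1 \<notin> J" unfolding J_def by auto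
  have s2: "(\<Sum>j\<in>{-int n+1..int n}. f (i+j)) = B + f (i - int n + 1)"
    unfolding J2 B_def using fin nJ by (simp add: algebra_simps)
  have cJ: "card J = 2*n-1" unfolding J_def using n by simp
  have r1: "real (2*n-1) = 2*real n - 1" using n by (simp add: of_nat_diff)
  have key: "(\<Sum>j\<in>J. f (i+j) - f (i - int n + 1)) = B - (2*real n - 1) * f (i - int n + 1)"
    unfolding B_def using r1 by (simp add: sum_subtractf cJ)
  have npos: "2*real n - 1 > 0" using n by simp
  have shift: "(\<Sum>j\<in>{-int n+1..int n-1}. f ((i+1)+j)) = B"
  proof -
    have "J = (\<lambda>j. j+1) ` {-int n+1..int n-1}" unfolding J_def
      by (auto simp: image_iff intro!: exI[of _ "_ - 1"])
    then have "B = sum (\<lambda>j. f (i+j)) ((\<lambda>j. j+1) ` {-int n+1..int n-1})" unfolding B_def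
      by simp
    also have "\<dots> = sum ((\<lambda>j. f (i+j)) \<circ> (\<lambda>j. j+1)) {-int n+1..int n-1}"
      by (rule sum.reindex) (simp add: inj_on_def)
    finally have "B = (\<Sum>j\<in>{-int n+1..int n-1}. f (i + (j+1)))" by simp
    then show ?thesis by (simp add: algebra_simps)
  qed
  have diff: "subdiv_rule n f (2*i+2) - subdiv_rule n f (2*i+1)
      = (\<Sum>j\<in>J. f (i+j) - f (i - int n + 1)) / (2*real n * (2*real n - 1))"
  proof -
    have e: "subdiv_rule n f (2*i+2) = B / (2*real n - 1)"
      using S_even[of n f "i+1"] shift r1 by (simp add: algebra_simps)
    have o: "subdiv_rule n f (2*i+1) = (B + f (i - int n + 1)) / (2*real n)"
      unfolding S_odd s2 by simp
    show ?thesis unfolding e o key using npos n by (simp add: field_simps)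
  qed
  have "\<bar>\<Sum>j\<in>J. f (i+j) - f (i - int n + 1)\<bar> \<le> (\<Sum>j\<in>J. \<bar>f (i+j) - f (i - int n + 1)\<bar>)" by (rule sum_abs)
  also have "\<dots> \<le> (\<Sum>j\<in>J. real_of_int (j - (-int n+2) + 1) * D)"
  proof (rule sum_mono)
    fix j assume "j \<in> J"
    then have "j \<ge> -int n + 2" unfolding J_def by auto
    have "\<bar>f (i+j) - f (i - int n + 1)\<bar> \<le> \<bar>real_of_int (i + j - (i - int n + 1))\<bar> * D" by (rule lipd_abs[OF L])
    then show "\<bar>f (i+j) - f (i - int n + 1)\<bar> \<le> real_of_int (j - (-int n+2) + 1) * D"
      using \<open>j \<ge> -int n + 2\<close> by (simp add: algebra_simps)
  qed
  also have "\<dots> = (\<Sum>j\<in>J. real_of_int (j - (-int n+2) + 1)) * D" by (simp add: sum_distrib_right)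
  also have "(\<Sum>j\<in>J. real_of_int (j - (-int n+2) + 1)) = real (2*n-1) * (real (2*n-1) + 1) / 2"
  proof -
    have "J = {(-int n+2)..(-int n+2) + int (2*n-1) - 1}" unfolding J_def using n by auto
    then show ?thesis using gauss_up[of "-int n+2" "2*n-1"] by simp
  qed
  finally have "\<bar>\<Sum>j\<in>J. f (i+j) - f (i - int n + 1)\<bar> \<le> (2*real n - 1) * (2*real n) / 2 * D"
    using r1 by (simp add: algebra_simps)
  then show ?thesis unfolding diff using npos n
    by (simp add: abs_divide divide_le_eq field_simps)
qed

lemma contract:
  assumes L: "lipd D f" and n: "n \<ge> 1"
  shows "lipd (D/2) (subdiv_rule n f)"
  unfolding lipd_def
proof
  fix m :: int
  show "\<bar>subdiv_rule n f (m+1) - subdiv_rule n f m\<bar> \<le> D / 2"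
  proof (cases "even m")
    case True
    then obtain i where "m = 2*i" by blast
    then show ?thesis using contract_even[OF L n, of i] by simp
  next
    case False
    then obtain i where m: "m = 2*i+1" by (metis odd_two_times_div_two_succ)
    then have "m + 1 = 2*i+2" by simp
    then show ?thesis using contract_odd[OF L n, of i] m by (simp only:)
  qed
qed


lemma geo_summ: "summable (\<lambda>m. c * (1/2::real)^m)"
  by (intro summable_mult summable_geometric) simp

lemma tail_bound:
  fixes h :: "nat \<Rightarrow> real"
  assumes hb: "\<And>m. \<bar>h m\<bar> \<le> c * (1/2)^m"
  shows "summable h" "\<bar>suminf h - (\<Sum>m<k. h m)\<bar> \<le> 2 * c * (1/2)^k"
proof -
  show sh: "summable h" by (rule summable_comparison_test'[OF geo_summ]) (use hb in simp)
  have "suminf h - (\<Sum>m<k. h m) = (\<Sum>m. h (m + k))" using suminf_minus_initial_segment[OF sh] by simp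
  also have "\<bar>\<dots>\<bar> \<le> (\<Sum>m. c * (1/2)^k * (1/2)^m)"
  proof (rule norm_suminf_le[where f="\<lambda>m. h (m+k)", unfolded real_norm_def])
    fix m show "\<bar>h (m+k)\<bar> \<le> c * (1/2)^k * (1/2)^m" using hb[of "m+k"] by (simp add: power_add mult_ac)
  next show "summable (\<lambda>m. c * (1/2)^k * (1/2::real)^m)" by (rule geo_summ)
  qed
  also have "\<dots> = c * (1/2)^k * 2" by (subst suminf_mult) (simp_all add: suminf_geometric)
  finally show "\<bar>suminf h - (\<Sum>m<k. h m)\<bar> \<le> 2 * c * (1/2)^k" by simp
qed

lemma floor_half: "\<lfloor>2 * y\<rfloor> div 2 = \<lfloor>y::real\<rfloor>"
proof -
  have a: "\<lfloor>y\<rfloor> \<le> y" "y < \<lfloor>y\<rfloor> + 1" by linarith+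
  have "2 * \<lfloor>y\<rfloor> \<le> \<lfloor>2*y\<rfloor>" using a by (simp add: le_floor_iff)
  moreover have "\<lfloor>2*y\<rfloor> < 2 * \<lfloor>y\<rfloor> + 2" using a by (simp add: floor_less_iff) linarith
  ultimately show ?thesis by linarith
qed

lemma floor_diff_bound: "\<bar>real_of_int (\<lfloor>a\<rfloor> - \<lfloor>b\<rfloor>)\<bar> \<le> \<bar>a - b\<bar> + 1"
  by linarith

lemma vanish: assumes "\<And>k::nat. (a::real) \<le> b + e * (1/2)^k" shows "a \<le> b"
proof (rule ccontr)
  assume "\<not> a \<le> b"
  then have d: "a - b > 0" by simp
  have e0: "e \<ge> 0" using assms[of 0] d by simp
  obtain k where "(1/2::real)^k < (a-b) / (e+1)"
    using real_arch_pow_inv[of "(a-b)/(e+1)" "1/2"] d e0 by auto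
  then have "(e+1) * (1/2)^k < a - b" using e0 by (simp add: field_simps)
  moreover have "e * (1/2::real)^k \<le> (e+1) * (1/2)^k" by (simp add: field_simps)
  ultimately show False using assms[of k] by linarith
qed


lemma lipd_iter:
  assumes L: "lipd D f" and n: "n \<ge> 1"
  shows "lipd (D * (1/2)^k) ((subdiv_rule n ^^ k) f)"
proof (induction k)
  case 0 then show ?case using L by simp
next
  case (Suc k)
  from contract[OF Suc n] show ?case by (simp add: mult_ac)
qed

lemma main_limit:
  assumes n: "n \<ge> 1" and bd: "bounded (range f0)"
  shows "\<exists>F. generates_limit (subdiv_rule n) f0 F"
proof -
  obtain M where M: "\<And>i. \<bar>f0 i\<bar> \<le> M" using bd unfolding bounded_iff by auto
  define D0 where "D0 = 2*M"
  have L0: "lipd D0 f0" unfolding lipd_def D0_def using M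
    by (metis abs_triangle_ineq4 add_mono mult_2 order_trans)
  define fk where "fk k = (subdiv_rule n ^^ k) f0" for k
  have Lk: "lipd (D0 * (1/2)^k) (fk k)" for k unfolding fk_def by (rule lipd_iter[OF L0 n])
  have D0nn: "D0 \<ge> 0" using lipd_nonneg[OF L0] .
  define g where "g k x = fk k \<lfloor>2^k * x\<rfloor>" for k and x :: real
  define c where "c = real n * D0"
  define h where "h x m = g (Suc m) x - g m x" for x m
  have hb: "\<bar>h x m\<bar> \<le> c * (1/2)^m" for x m
  proof -
    have "g (Suc m) x = subdiv_rule n (fk m) \<lfloor>2 * (2^m * x)\<rfloor>"
      unfolding g_def fk_def by (simp add: mult_ac)
    moreover have "g m x = fk m (\<lfloor>2 * (2^m * x)\<rfloor> div 2)" unfolding g_def floor_half ..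
    ultimately show ?thesis unfolding h_def c_def using S_close[OF Lk[of m] n, of "\<lfloor>2 * (2^m * x)\<rfloor>"]
      by (simp add: mult_ac)
  qed
  define F where "F x = g 0 x + suminf (h x)" for x
  have Fb: "\<bar>F x - g k x\<bar> \<le> 2 * c * (1/2)^k" for x k
  proof -
    have tel: "g k x = g 0 x + (\<Sum>m<k. h x m)" unfolding h_def using sum_lessThan_telescope[of "\<lambda>m. g m x" k] by simp
    show ?thesis unfolding F_def tel using tail_bound(2)[of "h x", OF hb] by simp
  qed
  have gnode: "g k (real_of_int i / 2^k) = fk k i" for k i unfolding g_def by simp
  have glip: "\<bar>g k x - g k y\<bar> \<le> D0 * \<bar>x - y\<bar> + D0 * (1/2)^k" for k x y
  proof -
    have "\<bar>g k x - g k y\<bar> \<le> \<bar>real_of_int (\<lfloor>2^k * x\<rfloor> - \<lfloor>2^k * y\<rfloor>)\<bar> * (D0 * (1/2)^k)"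
      unfolding g_def by (rule lipd_abs[OF Lk])
    also have "\<dots> \<le> (\<bar>2^k * x - 2^k * y\<bar> + 1) * (D0 * (1/2)^k)"
      by (rule mult_right_mono[OF floor_diff_bound]) (use D0nn in simp)
    also have "\<bar>2^k * x - 2^k * y\<bar> = 2^k * \<bar>x - y\<bar>"
      by (simp add: abs_mult right_diff_distrib[symmetric])
    also have "(2^k * \<bar>x - y\<bar> + 1) * (D0 * (1/2)^k) = D0 * \<bar>x - y\<bar> + D0 * (1/2)^k"
      by (simp add: abs_mult right_diff_distrib[symmetric] field_simps power_divide)
    finally show ?thesis .
  qed
  have Flip: "\<bar>F x - F y\<bar> \<le> D0 * \<bar>x - y\<bar>" for x y
  proof (rule vanish[where e="4*c + D0"])
    fix k
    have "\<bar>F x - F y\<bar> \<le> \<bar>F x - g k x\<bar> + \<bar>g k x - g k y\<bar> + \<bar>F y - g k y\<bar>" by linarith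
    also have "\<dots> \<le> 2 * c * (1/2)^k + (D0 * \<bar>x - y\<bar> + D0 * (1/2)^k) + 2 * c * (1/2)^k"
      using Fb[of x k] Fb[of y k] glip[of k x y] by linarith
    finally show "\<bar>F x - F y\<bar> \<le> D0 * \<bar>x - y\<bar> + (4*c + D0) * (1/2)^k" by (simp add: algebra_simps)
  qed
  have cont: "continuous_on UNIV F"
  proof (rule lipschitz_on_continuous_on)
    show "D0-lipschitz_on UNIV F" unfolding lipschitz_on_def using Flip D0nn by (simp add: dist_real_def)
  qed
  have conv: "\<forall>\<epsilon>>0. \<exists>K. \<forall>k\<ge>K. \<forall>i. \<bar>fk k i - F (real_of_int i / 2 ^ k)\<bar> \<le> \<epsilon>"
  proof (intro allI impI)
    fix \<epsilon> :: real assume e: "\<epsilon> > 0"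
    have c0: "c \<ge> 0" unfolding c_def using D0nn by simp
    obtain K where K: "(1/2::real)^K < \<epsilon> / (2*c+1)"
      using real_arch_pow_inv[of "\<epsilon> / (2*c+1)" "1/2"] e c0 by auto
    have e1: "2 * c * (1/2::real)^K \<le> \<epsilon>"
    proof -
      have "(2*c+1) * (1/2::real)^K < \<epsilon>" using K c0 by (simp add: field_simps)
      moreover have "2*c * (1/2::real)^K \<le> (2*c+1) * (1/2)^K" by (simp add: field_simps)
      ultimately show ?thesis by linarith
    qed
    have e2: "2 * c * (1/2::real)^k \<le> 2 * c * (1/2)^K" if "k \<ge> K" for k
      using that c0 by (intro mult_left_mono power_decreasing) auto
    have "\<forall>k\<ge>K. \<forall>i. \<bar>fk k i - F (real_of_int i / 2 ^ k)\<bar> \<le> \<epsilon>"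
    proof (intro allI impI)
      fix k i assume kK: "k \<ge> K"
      have "\<bar>fk k i - F (real_of_int i / 2 ^ k)\<bar> = \<bar>F (real_of_int i / 2 ^ k) - g k (real_of_int i / 2 ^ k)\<bar>"
        unfolding gnode by (rule abs_minus_commute)
      also have "\<dots> \<le> 2 * c * (1/2)^k" by (rule Fb)
      finally show "\<bar>fk k i - F (real_of_int i / 2 ^ k)\<bar> \<le> \<epsilon>"
        using e1 e2[OF kK] by linarith
    qed
    then show "\<exists>K. \<forall>k\<ge>K. \<forall>i. \<bar>fk k i - F (real_of_int i / 2 ^ k)\<bar> \<le> \<epsilon>" by blast
  qed
  show ?thesis unfolding generates_limit_def using cont conv unfolding fk_def by blast
qed


lemma const_iter:
  assumes n: "n \<ge> 1"
  shows "(subdiv_rule n ^^ k) (\<lambda>_. 1) = (\<lambda>_. 1)"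
proof (induction k)
  case 0 then show ?case by simp
next
  case (Suc k)
  have L: "lipd 0 (\<lambda>_::int. 1::real)" unfolding lipd_def by simp
  have "subdiv_rule n (\<lambda>_. 1) m = 1" for m using S_close[OF L n, of m] by simp
  then show ?case using Suc by auto
qed

theorem theorem1:
  fixes n :: nat
  assumes "n \<ge> 1"
  shows "convergent_scheme (subdiv_rule n)"
  unfolding convergent_scheme_def
proof (intro conjI allI impI)
  fix f0 :: "int \<Rightarrow> real" assume "bounded (range f0)"
  then show "\<exists>F. generates_limit (subdiv_rule n) f0 F" by (rule main_limit[OF assms])
next
  have bd: "bounded (range (\<lambda>_::int. 1::real))" by simp
  obtain F where F: "generates_limit (subdiv_rule n) (\<lambda>_. 1) F" using main_limit[OF assms bd] by blast
  then obtain K where K: "\<forall>k\<ge>K. \<forall>i. \<bar>(subdiv_rule n ^^ k) (\<lambda>_. 1) i - F (real_of_int i / 2 ^ k)\<bar> \<le> 1/2"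
    unfolding generates_limit_def by (meson field_sum_of_halves zero_less_one half_gt_zero)
  then have "\<bar>1 - F 0\<bar> \<le> 1/2" using const_iter[OF assms, of K] by (metis le_refl of_int_0 div_0)
  then have "F \<noteq> (\<lambda>_. 0)" by auto
  then show "\<exists>f0 F. bounded (range f0) \<and> generates_limit (subdiv_rule n) f0 F \<and> F \<noteq> (\<lambda>_. 0)"
    using bd F by blast
qed

end
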